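(* Let $G$ be a finite simple graph with vertices ordered as $V(G)=\{u_1,\dots,u_n\}$, and let $\widehat{G}$ be the graph constructed from $G$ and this ordering as follows: $V(\widehat{G})=\{(u_i,u_j)\,:\,1\le i<j\le n,\ u_iu_j\in E(G)\}$, and two distinct vertices $(u_i,u_j)$ and $(u_k,u_l)$ of $\widehat{G}$ with $j\le l$ are adjacent if and only if $i=k$, or $j=k$, or ($j=l$ and $u_iu_k\notin E(G)$). Then \[ h^*(G,x)=I(\widehat{G},x). \] Moreover, if $e=u_{n-1}u_n\in E(G)$, then $\widehat{G-e}$ (constructed from $G-e$ with the same vertex ordering) is a subgraph of $\widehat{G}$.
   Context: For a graph $G$ on $n$ vertices, let $a_k(G)$ denote the number of partitions of $V(G)$ into exactly $k$ parts each of which induces a complete subgraph of $G$. The adjoint polynomial is $h(G,x)=\sum_{k=1}^n(-1)^{n-k}a_k(G)x^k$, and $h^*(G,x)=x^n h(G,1/x)=\sum_{k=0}^{n-1}(-1)^k a_{n-k}(G)x^k$. For a graph $H$, the independence polynomial is $I(H,x)=\sum_{k\ge 0}(-1)^k i_k(H)x^k$, where $i_k(H)$ is the number of independent sets of size $k$ in $H$ (with $i_0(H)=1$). $G-e$ denotes the graph obtained from $G$ by deleting the edge $e$. *)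

theory Defs
  imports Main "HOL-Library.Disjoint_Sets" "HOL-Computational_Algebra.Polynomial"
begin

text \<open>A finite simple graph with vertices ordered u_1,...,u_n is represented by
  its vertex set {1..n} (vertex i stands for u_i) and a symmetric irreflexive
  adjacency relation E supported on {1..n}.\<close>

definition simple_graph :: "nat \<Rightarrow> (nat \<Rightarrow> nat \<Rightarrow> bool) \<Rightarrow> bool" where
  "simple_graph n E \<longleftrightarrow>
     (\<forall>a b. E a b \<longrightarrow> E b a) \<and> (\<forall>a. \<not> E a a) \<and>
     (\<forall>a b. E a b \<longrightarrow> a \<in> {1..n} \<and> b \<in> {1..n})"

definition clique_partitions :: "nat \<Rightarrow> (nat \<Rightarrow> nat \<Rightarrow> bool) \<Rightarrow> nat \<Rightarrow> nat set set set" where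
  "clique_partitions n E k =
     {P. partition_on {1..n} P \<and> card P = k \<and>
         (\<forall>B\<in>P. \<forall>a\<in>B. \<forall>b\<in>B. a \<noteq> b \<longrightarrow> E a b)}"

definition a_coeff :: "nat \<Rightarrow> (nat \<Rightarrow> nat \<Rightarrow> bool) \<Rightarrow> nat \<Rightarrow> nat" where
  "a_coeff n E k = card (clique_partitions n E k)"

definition h_star :: "nat \<Rightarrow> (nat \<Rightarrow> nat \<Rightarrow> bool) \<Rightarrow> int poly" where
  "h_star n E = (\<Sum>k<n. monom ((-1)^k * int (a_coeff n E (n - k))) k)"

definition indep_sets :: "'v set \<Rightarrow> ('v \<Rightarrow> 'v \<Rightarrow> bool) \<Rightarrow> nat \<Rightarrow> 'v set set" where
  "indep_sets V A k = {S. S \<subseteq> V \<and> card S = k \<and> (\<forall>x\<in>S. \<forall>y\<in>S. \<not> A x y)}"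

definition indep_poly :: "'v set \<Rightarrow> ('v \<Rightarrow> 'v \<Rightarrow> bool) \<Rightarrow> int poly" where
  "indep_poly V A = (\<Sum>k\<le>card V. monom ((-1)^k * int (card (indep_sets V A k))) k)"

definition hat_V :: "nat \<Rightarrow> (nat \<Rightarrow> nat \<Rightarrow> bool) \<Rightarrow> (nat \<times> nat) set" where
  "hat_V n E = {(i, j). 1 \<le> i \<and> i < j \<and> j \<le> n \<and> E i j}"

definition hat_cond :: "(nat \<Rightarrow> nat \<Rightarrow> bool) \<Rightarrow> nat \<times> nat \<Rightarrow> nat \<times> nat \<Rightarrow> bool" where
  "hat_cond E p q = (case p of (i, j) \<Rightarrow> case q of (k, l) \<Rightarrow>
       i = k \<or> j = k \<or> (j = l \<and> \<not> E i k))"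

definition hat_adj :: "(nat \<Rightarrow> nat \<Rightarrow> bool) \<Rightarrow> nat \<times> nat \<Rightarrow> nat \<times> nat \<Rightarrow> bool" where
  "hat_adj E p q \<longleftrightarrow> p \<noteq> q \<and>
     (if snd p \<le> snd q then hat_cond E p q else hat_cond E q p)"

definition del_edge :: "(nat \<Rightarrow> nat \<Rightarrow> bool) \<Rightarrow> nat \<Rightarrow> nat \<Rightarrow> nat \<Rightarrow> nat \<Rightarrow> bool" where
  "del_edge E a b = (\<lambda>x y. E x y \<and> {x, y} \<noteq> {a, b})"

end

theory Submission
  imports Defs
begin

definition hphi :: "nat set set \<Rightarrow> (nat \<times> nat) set" where
  "hphi P = (\<Union>B\<in>P. (\<lambda>i. (i, Max B)) ` (B - {Max B}))"

definition hpsi :: "nat \<Rightarrow> (nat \<times> nat) set \<Rightarrow> nat set set" where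
  "hpsi n S = (\<lambda>j. insert j {i. (i,j)\<in>S}) ` {j\<in>{1..n}. \<forall>l. (j,l)\<notin>S}"

lemma part_facts:
  fixes n :: nat
  assumes P: "partition_on {1..n} P" and B: "B \<in> P"
  shows "B \<subseteq> {1..n}" "B \<noteq> {}" "finite B" "Max B \<in> B" "\<And>x. x \<in> B \<Longrightarrow> x \<le> Max B"
proof -
  show 1: "B \<subseteq> {1..n}" using partition_onD1[OF P] B by blast
  show 2: "B \<noteq> {}" using partition_onD3[OF P] B by blast
  show 3: "finite B" using 1 by (rule finite_subset) simp
  show "Max B \<in> B" using 2 3 by simp
  show "\<And>x. x \<in> B \<Longrightarrow> x \<le> Max B" using 3 by simp
qed

lemma part_uniq:
  fixes n :: nat
  assumes P: "partition_on {1..n} P" and "B \<in> P" "C \<in> P" "x \<in> B" "x \<in> C"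
  shows "B = C"
  using partition_onD2[OF P] assms(2-) unfolding pairwise_def disjnt_def by blast

lemma L1:
  assumes sg: "simple_graph n E" and P: "partition_on {1..n} P"
    and cl: "\<forall>B\<in>P. \<forall>a\<in>B. \<forall>b\<in>B. a \<noteq> b \<longrightarrow> E a b"
  shows "hphi P \<subseteq> hat_V n E"
    "\<forall>x\<in>hphi P. \<forall>y\<in>hphi P. \<not> hat_adj E x y"
    "hpsi n (hphi P) = P"
    "card (hphi P) + card P = n"
proof -
  note pf = part_facts[OF P]
  note pu = part_uniq[OF P]
  show "hphi P \<subseteq> hat_V n E"
  proof
    fix x assume "x \<in> hphi P"
    then obtain B i where B: "B \<in> P" "i \<in> B" "i \<noteq> Max B" and x: "x = (i, Max B)"
      unfolding hphi_def by blast
    have "i < Max B" using pf(5)[OF B(1) B(2)] B(3) by simp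
    moreover have "1 \<le> i" "Max B \<le> n" using pf(1)[OF B(1)] pf(4)[OF B(1)] B(2) by auto
    moreover have "E i (Max B)" using cl B pf(4)[OF B(1)] by blast
    ultimately show "x \<in> hat_V n E" unfolding x hat_V_def by simp
  qed
  show "\<forall>x\<in>hphi P. \<forall>y\<in>hphi P. \<not> hat_adj E x y"
  proof (intro ballI)
    fix x y assume "x \<in> hphi P" "y \<in> hphi P"
    then obtain B i C k where B: "B \<in> P" "i \<in> B" "i \<noteq> Max B" and x: "x = (i, Max B)"
      and C: "C \<in> P" "k \<in> C" "k \<noteq> Max C" and y: "y = (k, Max C)"
      unfolding hphi_def by blast
    show "\<not> hat_adj E x y"
    proof
      assume adj: "hat_adj E x y"
      hence ne: "x \<noteq> y" unfolding hat_adj_def by simp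
      have ik: "i \<noteq> k"
      proof
        assume "i = k" hence "B = C" using pu B C by metis
        thus False using ne x y \<open>i = k\<close> by simp
      qed
      have mk: "Max B \<noteq> k"
      proof
        assume "Max B = k" hence "B = C" using pu B C pf(4) by metis
        thus False using C \<open>Max B = k\<close> by simp
      qed
      have mi: "Max C \<noteq> i"
      proof
        assume "Max C = i" hence "B = C" using pu B C pf(4) by metis
        thus False using B \<open>Max C = i\<close> by simp
      qed
      have eq: "Max B = Max C \<Longrightarrow> E i k"
      proof -
        assume "Max B = Max C" hence "B = C" using pu B C pf(4) by metis
        thus "E i k" using cl B C ik by blast
      qed
      have eq2: "E k i" if "Max B = Max C"
        using eq[OF that] sg unfolding simple_graph_def by blast
      have "\<not> hat_cond E x y" "\<not> hat_cond E y x"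
        unfolding x y hat_cond_def using ik mk mi eq eq2 by auto
      thus False using adj unfolding hat_adj_def by (auto split: if_splits)
    qed
  qed
  define S where "S = hphi P"
  have memS: "(a, b) \<in> S \<longleftrightarrow> (\<exists>B\<in>P. a \<in> B \<and> a \<noteq> Max B \<and> b = Max B)" for a b
    unfolding S_def hphi_def by blast
  have R: "{j\<in>{1..n}. \<forall>l. (j,l)\<notin>S} = Max ` P"
  proof (intro equalityI subsetI)
    fix j assume j: "j \<in> {j\<in>{1..n}. \<forall>l. (j,l)\<notin>S}"
    then obtain B where "B \<in> P" "j \<in> B" using partition_onD1[OF P] by blast
    hence "j = Max B" using j memS by blast
    thus "j \<in> Max ` P" using \<open>B \<in> P\<close> by blast
  next
    fix j assume "j \<in> Max ` P"
    then obtain B where B: "B \<in> P" "j = Max B" by blast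
    have "j \<in> {1..n}" using pf(1)[OF B(1)] pf(4)[OF B(1)] B by auto
    moreover have "(j, l) \<notin> S" for l
    proof
      assume "(j,l) \<in> S"
      then obtain C where C: "C \<in> P" "j \<in> C" "j \<noteq> Max C" using memS by blast
      have "B = C" using pu B(1) C(1) C(2) pf(4)[OF B(1)] B(2) by metis
      thus False using C B by simp
    qed
    ultimately show "j \<in> {j\<in>{1..n}. \<forall>l. (j,l)\<notin>S}" by simp
  qed
  have blk: "insert (Max B) {i. (i, Max B) \<in> S} = B" if B: "B \<in> P" for B
  proof -
    have "{i. (i, Max B) \<in> S} = B - {Max B}"
    proof (intro equalityI subsetI)
      fix i assume "i \<in> {i. (i, Max B) \<in> S}"
      then obtain C where C: "C \<in> P" "i \<in> C" "i \<noteq> Max C" "Max B = Max C" using memS by blast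
      have "B = C" using pu B C(1) pf(4)[OF B] pf(4)[OF C(1)] C(4) by metis
      thus "i \<in> B - {Max B}" using C by simp
    next
      fix i assume "i \<in> B - {Max B}"
      thus "i \<in> {i. (i, Max B) \<in> S}" using memS B by blast
    qed
    thus ?thesis using pf(4)[OF B] by blast
  qed
  show "hpsi n (hphi P) = P"
  proof -
    have "hpsi n S = (\<lambda>j. insert j {i. (i,j)\<in>S}) ` (Max ` P)"
      unfolding hpsi_def R ..
    also have "\<dots> = (\<lambda>B. insert (Max B) {i. (i, Max B)\<in>S}) ` P" by (simp add: image_image)
    also have "\<dots> = P" using blk by simp
    finally show ?thesis unfolding S_def .
  qed
  have finP: "finite P" using finite_elements[OF _ P] by simp
  have "card (hphi P) = (\<Sum>B\<in>P. card ((\<lambda>i. (i, Max B)) ` (B - {Max B})))"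
    unfolding hphi_def
  proof (rule card_UN_disjoint[OF finP])
    show "\<forall>B\<in>P. finite ((\<lambda>i. (i, Max B)) ` (B - {Max B}))" using pf(3) by blast
    show "\<forall>B\<in>P. \<forall>C\<in>P. B \<noteq> C \<longrightarrow>
      (\<lambda>i. (i, Max B)) ` (B - {Max B}) \<inter> (\<lambda>i. (i, Max C)) ` (C - {Max C}) = {}"
    proof (intro ballI impI)
      fix B C assume "B \<in> P" "C \<in> P" "B \<noteq> C"
      hence "Max B \<noteq> Max C" using pu pf(4) by metis
      thus "(\<lambda>i. (i, Max B)) ` (B - {Max B}) \<inter> (\<lambda>i. (i, Max C)) ` (C - {Max C}) = {}" by auto
    qed
  qed
  also have "\<dots> = (\<Sum>B\<in>P. card B - 1)"
  proof (rule sum.cong[OF refl])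
    fix B assume "B \<in> P"
    have "card ((\<lambda>i. (i, Max B)) ` (B - {Max B})) = card (B - {Max B})"
      by (rule card_image) (auto simp: inj_on_def)
    also have "\<dots> = card B - 1" using pf(3,4)[OF \<open>B \<in> P\<close>] by simp
    finally show "card ((\<lambda>i. (i, Max B)) ` (B - {Max B})) = card B - 1" .
  qed
  finally have c1: "card (hphi P) = (\<Sum>B\<in>P. card B - 1)" .
  have "(\<Sum>B\<in>P. card B - 1) + card P = (\<Sum>B\<in>P. (card B - 1) + 1)"
    by (subst sum.distrib) simp
  also have "\<dots> = (\<Sum>B\<in>P. card B)"
  proof (rule sum.cong[OF refl])
    fix B assume "B \<in> P"
    hence "card B \<ge> 1" using pf(2,3) by (simp add: Suc_le_eq card_gt_0_iff)
    thus "card B - 1 + 1 = card B" by simp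
  qed
  also have "\<dots> = card (\<Union>P)"
    by (rule card_Union_disjoint[symmetric]) (use partition_onD2[OF P] pf(3) in auto)
  also have "\<dots> = n" by (simp add: partition_onD1[OF P, symmetric])
  finally show "card (hphi P) + card P = n" using c1 by simp
qed


lemma L2:
  assumes sg: "simple_graph n E" and SV: "S \<subseteq> hat_V n E"
    and ind: "\<forall>x\<in>S. \<forall>y\<in>S. \<not> hat_adj E x y"
  shows "partition_on {1..n} (hpsi n S)"
    "\<forall>B\<in>hpsi n S. \<forall>a\<in>B. \<forall>b\<in>B. a \<noteq> b \<longrightarrow> E a b"
    "hphi (hpsi n S) = S"
proof -
  have sym: "E a b \<Longrightarrow> E b a" for a b using sg unfolding simple_graph_def by blast
  have inV: "1 \<le> i \<and> i < j \<and> j \<le> n \<and> E i j" if "(i,j) \<in> S" for i j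
    using SV that unfolding hat_V_def by blast
  have fa: "j = l" if "(i,j) \<in> S" "(i,l) \<in> S" for i j l
  proof (rule ccontr)
    assume "j \<noteq> l"
    hence "hat_adj E (i,j) (i,l)" by (simp add: hat_adj_def hat_cond_def)
    thus False using ind that by blast
  qed
  have fb: False if "(i,j) \<in> S" "(j,l) \<in> S" for i j l
  proof -
    have "i < j" "j < l" using inV that by auto
    hence "hat_adj E (i,j) (j,l)" by (simp add: hat_adj_def hat_cond_def)
    thus False using ind that by blast
  qed
  have fc: "E i k" if "(i,j) \<in> S" "(k,j) \<in> S" "i \<noteq> k" for i j k
  proof (rule ccontr)
    assume "\<not> E i k"
    hence "hat_adj E (i,j) (k,j)" using \<open>i \<noteq> k\<close> by (simp add: hat_adj_def hat_cond_def)
    thus False using ind that by blast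
  qed
  define R where "R = {j\<in>{1..n}. \<forall>l. (j,l)\<notin>S}"
  define blk where "blk j = insert j {i. (i,j)\<in>S}" for j
  have ps: "hpsi n S = blk ` R" by (simp add: hpsi_def R_def blk_def)
  have jR: "j \<in> R" if "(i,j) \<in> S" for i j
    using inV[OF that] fb[OF that] unfolding R_def by auto
  have blk_sub: "blk j \<subseteq> {1..n}" if "j \<in> R" for j
    using that inV unfolding R_def blk_def by force
  show "partition_on {1..n} (hpsi n S)"
    unfolding ps
  proof (rule partition_onI)
    show "\<Union> (blk ` R) = {1..n}"
    proof (intro equalityI subsetI)
      fix x assume "x \<in> \<Union> (blk ` R)" thus "x \<in> {1..n}" using blk_sub by blast
    next
      fix x assume x: "x \<in> {1..n}"
      show "x \<in> \<Union> (blk ` R)"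
      proof (cases "\<forall>l. (x,l) \<notin> S")
        case True
        hence "x \<in> R" using x unfolding R_def by simp
        moreover have "x \<in> blk x" unfolding blk_def by simp
        ultimately show ?thesis by blast
      next
        case False
        then obtain l where l: "(x,l) \<in> S" by blast
        hence "l \<in> R" "x \<in> blk l" using jR unfolding blk_def by auto
        thus ?thesis by blast
      qed
    qed
  next
    fix p q assume "p \<in> blk ` R" "q \<in> blk ` R" "p \<noteq> q"
    then obtain j j' where jj: "j \<in> R" "j' \<in> R" "p = blk j" "q = blk j'" "j \<noteq> j'" by blast
    show "disjnt p q"
      unfolding disjnt_def jj blk_def using fa jj(1,2,5) unfolding R_def by blast
  next
    show "{} \<notin> blk ` R" unfolding blk_def by blast
  qed
  show "\<forall>B\<in>hpsi n S. \<forall>a\<in>B. \<forall>b\<in>B. a \<noteq> b \<longrightarrow> E a b"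
    unfolding ps blk_def using fc inV sym by blast
  have mx: "Max (blk j) = j" if "j \<in> R" for j
  proof (rule Max_eqI)
    show "finite (blk j)" using blk_sub[OF that] by (rule finite_subset) simp
    show "j \<in> blk j" unfolding blk_def by simp
    fix y assume "y \<in> blk j" thus "y \<le> j" unfolding blk_def using inV by force
  qed
  show "hphi (hpsi n S) = S"
  proof (intro equalityI subsetI)
    fix x assume "x \<in> hphi (hpsi n S)"
    then obtain j i where j: "j \<in> R" "i \<in> blk j" "i \<noteq> Max (blk j)" "x = (i, Max (blk j))"
      unfolding hphi_def ps by blast
    thus "x \<in> S" using mx[OF j(1)] unfolding blk_def by auto
  next
    fix x assume x: "x \<in> S"
    then obtain i j where ij: "x = (i,j)" by (cases x)
    have j: "j \<in> R" using jR x ij by simp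
    have "i \<in> blk j - {Max (blk j)}" using mx[OF j] x ij inV[of i j] unfolding blk_def by auto
    hence "x \<in> (\<lambda>i. (i, Max (blk j))) ` (blk j - {Max (blk j)})" using mx[OF j] ij by auto
    thus "x \<in> hphi (hpsi n S)" unfolding hphi_def ps using j by blast
  qed
qed

lemma edge_aux:
  assumes "i < j" "j \<le> (n::nat)" "k < j"
  shows "{i,k} \<noteq> {n - 1, n}"
proof
  assume "{i,k} = {n - 1, n}"
  hence "n \<in> {i,k}" by blast
  thus False using assms by auto
qed

theorem proposition2:
  fixes n :: nat and E :: "nat \<Rightarrow> nat \<Rightarrow> bool"
  assumes "simple_graph n E" and "n \<ge> 1"
  shows "h_star n E = indep_poly (hat_V n E) (hat_adj E) \<and>
         (E (n - 1) n \<longrightarrow>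
           hat_V n (del_edge E (n - 1) n) \<subseteq> hat_V n E \<and>
           (\<forall>p\<in>hat_V n (del_edge E (n - 1) n). \<forall>q\<in>hat_V n (del_edge E (n - 1) n).
              hat_adj (del_edge E (n - 1) n) p q \<longrightarrow> hat_adj E p q))"
proof (intro conjI impI)
  note sg = assms(1)
  define V where "V = hat_V n E"
  define A where "A = hat_adj E"
  have finV: "finite V" 
    by (rule finite_subset[of _ "{1..n} \<times> {1..n}"]) (auto simp: V_def hat_V_def)
  have cardrel: "card S + card (hpsi n S) = n" and cardlt: "card S < n"
    if S: "S \<subseteq> V" "\<forall>x\<in>S. \<forall>y\<in>S. \<not> A x y" for S
  proof -
    note l2 = L2[OF sg S[unfolded V_def A_def]]
    note l1 = L1[OF sg l2(1) l2(2)]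
    show c: "card S + card (hpsi n S) = n" using l1(4) l2(3) by simp
    have "hpsi n S \<noteq> {}" using partition_onD1[OF l2(1)] assms(2) by auto
    moreover have "finite (hpsi n S)" using finite_elements[OF _ l2(1)] by simp
    ultimately have "card (hpsi n S) \<ge> 1" by (simp add: Suc_le_eq card_gt_0_iff)
    thus "card S < n" using c by simp
  qed
  have bij: "card (clique_partitions n E (n - m)) = card (indep_sets V A m)" if m: "m < n" for m
  proof (rule bij_betw_same_card[of hphi])
    show "bij_betw hphi (clique_partitions n E (n - m)) (indep_sets V A m)"
    proof (rule bij_betw_byWitness[where f'="hpsi n"])
      show "\<forall>a\<in>clique_partitions n E (n - m). hpsi n (hphi a) = a"
        using L1(3)[OF sg] unfolding clique_partitions_def by blast
      show "\<forall>a'\<in>indep_sets V A m. hphi (hpsi n a') = a'"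
        using L2(3)[OF sg] unfolding indep_sets_def V_def A_def by blast
      show "hphi ` clique_partitions n E (n - m) \<subseteq> indep_sets V A m"
      proof
        fix S assume "S \<in> hphi ` clique_partitions n E (n - m)"
        then obtain P where P: "P \<in> clique_partitions n E (n - m)" "S = hphi P" by blast
        note l1 = L1[OF sg, of P] 
        have "card S = m" using l1(4) P m unfolding clique_partitions_def by auto
        thus "S \<in> indep_sets V A m" using l1(1,2) P unfolding clique_partitions_def
          indep_sets_def V_def A_def by auto
      qed
      show "hpsi n ` indep_sets V A m \<subseteq> clique_partitions n E (n - m)"
      proof
        fix P assume "P \<in> hpsi n ` indep_sets V A m"
        then obtain S where S: "S \<in> indep_sets V A m" "P = hpsi n S" by blast
        have S': "S \<subseteq> V" "\<forall>x\<in>S. \<forall>y\<in>S. \<not> A x y" "card S = m"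
          using S(1) unfolding indep_sets_def by auto
        note l2 = L2[OF sg S'(1,2)[unfolded V_def A_def]]
        have "card P = n - m" using cardrel[OF S'(1,2)] S'(3) S(2) by simp
        thus "P \<in> clique_partitions n E (n - m)" using l2(1,2) S(2)
          unfolding clique_partitions_def by auto
      qed
    qed
  qed
  have empty_big: "indep_sets V A m = {}" if "m \<ge> n" for m
    using cardlt that unfolding indep_sets_def by fastforce
  have empty_big2: "indep_sets V A m = {}" if "m > card V" for m
    using that card_mono[OF finV] unfolding indep_sets_def by fastforce
  show "h_star n E = indep_poly (hat_V n E) (hat_adj E)"
    unfolding V_def[symmetric] A_def[symmetric]
  proof (rule poly_eqI)
    fix m
    have l: "coeff (h_star n E) m = (if m < n then (-1)^m * int (a_coeff n E (n - m)) else 0)"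
      unfolding h_star_def coeff_sum coeff_monom by (simp add: sum.delta)
    have r: "coeff (indep_poly V A) m =
        (if m \<le> card V then (-1)^m * int (card (indep_sets V A m)) else 0)"
      unfolding indep_poly_def coeff_sum coeff_monom by (simp add: sum.delta)
    show "coeff (h_star n E) m = coeff (indep_poly V A) m"
    proof (cases "m < n")
      case True
      then show ?thesis unfolding l r using bij[OF True] empty_big2[of m] unfolding a_coeff_def by auto
    next
      case False
      then show ?thesis unfolding l r using empty_big[of m] by auto
    qed
  qed
  show "hat_V n (del_edge E (n - 1) n) \<subseteq> hat_V n E"
    unfolding hat_V_def del_edge_def by auto
  show "\<forall>p\<in>hat_V n (del_edge E (n - 1) n). \<forall>q\<in>hat_V n (del_edge E (n - 1) n).
              hat_adj (del_edge E (n - 1) n) p q \<longrightarrow> hat_adj E p q"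
  proof (intro ballI impI)
    fix p q assume p: "p \<in> hat_V n (del_edge E (n - 1) n)" and q: "q \<in> hat_V n (del_edge E (n - 1) n)"
      and adj: "hat_adj (del_edge E (n - 1) n) p q"
    obtain i j where pij: "p = (i,j)" by (cases p)
    obtain k l where qkl: "q = (k,l)" by (cases q)
    have ij: "i < j" "j \<le> n" using p pij unfolding hat_V_def by auto
    have kl: "k < l" "l \<le> n" using q qkl unfolding hat_V_def by auto
    have e1: "j = l \<Longrightarrow> {i,k} \<noteq> {n - 1, n}" using edge_aux ij kl by simp
    have e2: "j = l \<Longrightarrow> {k,i} \<noteq> {n - 1, n}" using edge_aux ij kl by (simp add: insert_commute)
    show "hat_adj E p q"
      using adj e1 e2 unfolding pij qkl hat_adj_def hat_cond_def del_edge_def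
      by (auto split: if_splits)
  qed
qed

end
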